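(* Let $n>2$ and let $M_n$ be the graph defined below. For every $k>0$ and all $i\ne j$ in $\{1,\dots,n\}$, the graph $\sigma^{ij}_{\bowtie}(M_n)$ is not a $k$-polygon-circle graph.
   Context: $M_n$ has $6n$ nodes $v_1,\dots,v_{6n}$: the nodes $v_1,\dots,v_{4n}$ form a path (edges $\{v_t,v_{t+1}\}$, $1\le t<4n$), and for each $i\in\{1,\dots,n\}$ there are the additional edges $\{v_{4i-3},v_{4n+i}\}$, $\{v_{4i-2},v_{5n+i}\}$ and $\{v_{4n+i},v_{5n+i}\}$. For $i\in\{1,\dots,n\}$, $H_i$ is the subgraph with vertices $v_{4n+i},v_{5n+i}$ and the edge between them, and $\sigma_i:V(H_1)\to V(H_i)$ is the isomorphism with $\sigma_i(v_{4n+1})=v_{5n+i}$, $\sigma_i(v_{5n+1})=v_{4n+i}$; $\sigma^{ij}=\sigma_i\circ\sigma_j^{-1}$. Crossing: given a graph $G$ and two independent isomorphic subgraphs $H=(V_1,E_1)$, $H'=(V_2,E_2)$ (disjoint vertex sets, no edges of $G$ between them) with isomorphism $\sigma:V_1\to V_2$, the crossing $\sigma_{\bowtie}(G)$ is obtained from $G$ by replacing every pair of edges $\{u,v\}\in E_1$, $\{\sigma(u),\sigma(v)\}\in E_2$ by the pair $\{u,\sigma(v)\}$, $\{\sigma(u),v\}$. A $k$-polygon-circle graph is the intersection graph of a family of convex polygons with $k$ vertices, all vertices lying on a common circle. *)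

theory Defs
  imports "HOL-Analysis.Analysis"
begin

text \<open>Graphs: vertex set V :: nat set, edge set E :: nat set set (2-element sets).
  Vertex v_t is represented by the natural number t.\<close>

definition M_vertices :: "nat \<Rightarrow> nat set" where
  "M_vertices n = {1..6*n}"

definition M_edges :: "nat \<Rightarrow> nat set set" where
  "M_edges n =
     {{t, t+1} | t. 1 \<le> t \<and> t < 4*n}
     \<union> (\<Union>i\<in>{1..n}. {{4*i-3, 4*n+i}, {4*i-2, 5*n+i}, {4*n+i, 5*n+i}})"

definition H_vertices :: "nat \<Rightarrow> nat \<Rightarrow> nat set" where
  "H_vertices n i = {4*n+i, 5*n+i}"

definition H_edges :: "nat \<Rightarrow> nat \<Rightarrow> nat set set" where
  "H_edges n i = {{4*n+i, 5*n+i}}"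

definition sigma :: "nat \<Rightarrow> nat \<Rightarrow> nat \<Rightarrow> nat" where
  "sigma n i x = (if x = 4*n+1 then 5*n+i else if x = 5*n+1 then 4*n+i else x)"

definition sigma_ij :: "nat \<Rightarrow> nat \<Rightarrow> nat \<Rightarrow> nat \<Rightarrow> nat" where
  "sigma_ij n i j = sigma n i \<circ> the_inv_into (H_vertices n 1) (sigma n j)"

text \<open>Crossing along an isomorphism s from a subgraph with edge set E1 onto another subgraph:
  every pair of edges {u,v} in E1, {s u, s v} in E is replaced by {u, s v}, {s u, v}.\<close>
definition crossing :: "nat set set \<Rightarrow> nat set set \<Rightarrow> (nat \<Rightarrow> nat) \<Rightarrow> nat set set" where
  "crossing E E1 s =
     (E - {e. e \<in> E1 \<and> s ` e \<in> E} - {s ` e | e. e \<in> E1 \<and> s ` e \<in> E})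
     \<union> {{u, s v} | u v. {u, v} \<in> E1 \<and> u \<noteq> v \<and> {s u, s v} \<in> E}"

text \<open>The polygon of vertex x is the convex hull of a set
  P x of exactly k points on the circle (such points are in convex position, so the hull is a
  convex polygon with exactly these k vertices).\<close>
definition k_polygon_circle :: "nat set \<Rightarrow> nat set set \<Rightarrow> nat \<Rightarrow> bool" where
  "k_polygon_circle V E k \<longleftrightarrow>
     (\<exists>(c :: real^2) (r :: real) (P :: nat \<Rightarrow> (real^2) set).
        r > 0 \<and>
        (\<forall>x\<in>V. finite (P x) \<and> card (P x) = k \<and> P x \<subseteq> sphere c r) \<and>
        (\<forall>x\<in>V. \<forall>y\<in>V. x \<noteq> y \<longrightarrow>
            ({x, y} \<in> E \<longleftrightarrow> convex hull (P x) \<inter> convex hull (P y) \<noteq> {})))"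

end

theory Submission
  imports Defs
begin



definition cr :: "real^2 \<Rightarrow> real^2 \<Rightarrow> real^2 \<Rightarrow> real" where
  "cr a b q = (b$1 - a$1)*(q$2 - a$2) - (b$2 - a$2)*(q$1 - a$1)"

lemma trig_id: "sin (2*(x::real)) + sin (2*y) - sin (2*(x+y)) = 4 * sin x * sin y * sin (x+y)"
proof -
  have e: "sin (2*(x+y)) = 2*(sin x * cos y + cos x * sin y)*(cos x * cos y - sin x * sin y)"
    by (simp only: sin_double cos_add sin_add)
  have "sin x ^ 2 + cos x ^2 = 1" "sin y ^ 2 + cos y ^2 = 1" by simp_all
  then have "2 * sin x * cos x + 2 * sin y * cos y - 2*(sin x * cos y + cos x * sin y)*(cos x * cos y - sin x * sin y) = 4 * sin x * sin y * (sin x * cos y + cos x * sin y)"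
    by algebra
  then show ?thesis by (simp only: e sin_double sin_add cos_add)
qed

lemma cr_angles:
  assumes "a$1 = c1 + r * cos al" "a$2 = c2 + r * sin al"
    "b$1 = c1 + r * cos be" "b$2 = c2 + r * sin be"
    "q$1 = c1 + r * cos ga" "q$2 = c2 + r * sin ga"
  shows "cr a b q = r^2 * (4 * sin ((be-al)/2) * sin ((ga-be)/2) * sin ((ga-al)/2))"
proof -
  have 1: "cr a b q = r^2 * (sin (be-al) + sin (ga-be) - sin (ga-al))"
    unfolding cr_def assms by (simp add: sin_diff power2_eq_square algebra_simps)
  have h1: "2*((be-al)/2) = be-al" "2*((ga-be)/2) = ga-be" "(be-al)/2 + (ga-be)/2 = (ga-al)/2" "2*((ga-al)/2) = ga-al"
    by (simp_all add: field_simps)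
  have "sin (2*((be-al)/2)) + sin (2*((ga-be)/2)) - sin (2*((be-al)/2 + (ga-be)/2)) = 4 * sin ((be-al)/2) * sin ((ga-be)/2) * sin ((be-al)/2 + (ga-be)/2)"
    by (rule trig_id)
  then have "sin (be-al) + sin (ga-be) - sin (2*((ga-al)/2)) = 4 * sin ((be-al)/2) * sin ((ga-be)/2) * sin ((ga-al)/2)"
    by (simp only: h1)
  then have "sin (be-al) + sin (ga-be) - sin (ga-al) = 4 * sin ((be-al)/2) * sin ((ga-be)/2) * sin ((ga-al)/2)"
    by (simp only: h1(4))
  then show ?thesis using 1 by simp
qed

lemma cr_pos:
  assumes "a$1 = c1 + r * cos al" "a$2 = c2 + r * sin al"
    "b$1 = c1 + r * cos be" "b$2 = c2 + r * sin be"
    "q$1 = c1 + r * cos ga" "q$2 = c2 + r * sin ga"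
    "r > 0" "al < be" "be < ga" "ga - al < 2*pi"
  shows "cr a b q > 0"
proof -
  have "sin ((be-al)/2) > 0" "sin ((ga-be)/2) > 0" "sin ((ga-al)/2) > 0"
    using assms(8-10) by (auto intro!: sin_gt_zero)
  then show ?thesis unfolding cr_angles[OF assms(1-6)] using assms(7) by simp
qed

lemma cr_cyc: "cr a b q = cr b q a" "cr a b q = - cr a q b"
  unfolding cr_def by algebra+

lemma seg_meet:
  assumes "cr b1 b2 a1 > 0" "cr b1 b2 a2 < 0" "cr a1 a2 b1 < 0" "cr a1 a2 b2 > 0"
  shows "convex hull {a1,a2} \<inter> convex hull {b1,b2} \<noteq> {}"
proof -
  define d1 d2 e1 e2 where "d1 = cr b1 b2 a1" "d2 = cr b1 b2 a2" "e1 = cr a1 a2 b1" "e2 = cr a1 a2 b2"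
  define D where "D = d1 - d2"
  have D: "D > 0" using assms unfolding D_def d1_d2_e1_e2_def by simp
  have id1: "e2 - e1 = D" unfolding D_def d1_d2_e1_e2_def cr_def by algebra
  have id2: "d1 *\<^sub>R a2 - d2 *\<^sub>R a1 = e2 *\<^sub>R b1 - e1 *\<^sub>R b2"
    unfolding vec_eq_iff forall_2 d1_d2_e1_e2_def cr_def by simp algebra
  define p where "p = (d1/D) *\<^sub>R a2 + (-d2/D) *\<^sub>R a1"
  have "p \<in> convex hull {a1,a2}"
    unfolding convex_hull_2 p_def
    apply (rule CollectI, rule exI[of _ "-d2/D"], rule exI[of _ "d1/D"])
    using D assms unfolding d1_d2_e1_e2_def[symmetric]
    by (auto simp: D_def[symmetric] divide_simps)
  moreover have "p = (e2/D) *\<^sub>R b1 + (-e1/D) *\<^sub>R b2"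
  proof -
    have "p = (1/D) *\<^sub>R (d1 *\<^sub>R a2 - d2 *\<^sub>R a1)" unfolding p_def by (simp add: algebra_simps)
    also have "\<dots> = (1/D) *\<^sub>R (e2 *\<^sub>R b1 - e1 *\<^sub>R b2)" using id2 by simp
    finally show ?thesis by (simp add: algebra_simps)
  qed
  then have "p \<in> convex hull {b1,b2}"
    unfolding convex_hull_2
    apply -
    apply (rule CollectI, rule exI[of _ "e2/D"], rule exI[of _ "-e1/D"])
    using D assms id1 unfolding d1_d2_e1_e2_def[symmetric]
    by (auto simp: divide_simps)
  ultimately show ?thesis by blast
qed



definition btw :: "real \<Rightarrow> real \<Rightarrow> real \<Rightarrow> bool" where
  "btw u v z \<longleftrightarrow> (u < z \<and> z < v) \<or> (v < z \<and> z < u)"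

definition sg :: "real set \<Rightarrow> real \<Rightarrow> real \<Rightarrow> bool" where
  "sg Z u v \<longleftrightarrow> (\<forall>z\<in>Z. \<forall>z'\<in>Z. btw u v z \<longrightarrow> btw u v z')"

definition sep :: "real set \<Rightarrow> real set \<Rightarrow> bool" where
  "sep Z X \<longleftrightarrow> Z \<inter> X = {} \<and> (\<forall>u\<in>X. \<forall>v\<in>X. sg Z u v)"

lemma sg_sym: "sg Z u v = sg Z v u"
  unfolding sg_def btw_def by blast

lemma sg_refl: "sg Z u u"
  unfolding sg_def btw_def by auto

lemma sg_trans:
  assumes "sg Z u v" "sg Z v w" "u \<notin> Z" "v \<notin> Z" "w \<notin> Z"
  shows "sg Z u w"
  unfolding sg_def
proof (intro ballI impI)
  fix z z' assume z: "z \<in> Z" "z' \<in> Z" "btw u w z"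
  have "btw u v z \<longleftrightarrow> btw u v z'" "btw v w z \<longleftrightarrow> btw v w z'"
    using assms(1,2) z(1,2) unfolding sg_def by blast+
  moreover have "z \<noteq> u" "z \<noteq> v" "z \<noteq> w" "z' \<noteq> u" "z' \<noteq> v" "z' \<noteq> w"
    using assms(3-5) z by auto
  ultimately show "btw u w z'" using z(3) unfolding btw_def by (smt (verit))
qed

lemma sep_sym: assumes "sep Z X" shows "sep X Z"
  unfolding sep_def
proof (intro conjI ballI)
  show "X \<inter> Z = {}" using assms unfolding sep_def by blast
  fix z z' assume z: "z \<in> Z" "z' \<in> Z"
  show "sg X z z'" unfolding sg_def
  proof (intro ballI impI)
    fix x x' assume x: "x \<in> X" "x' \<in> X" "btw z z' x"
    have "btw x x' z \<longleftrightarrow> btw x x' z'"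
      using assms z x unfolding sep_def sg_def by blast
    moreover have "x \<noteq> z" "x \<noteq> z'" "x' \<noteq> z" "x' \<noteq> z'" using assms z x unfolding sep_def by auto
    ultimately show "btw z z' x'" using x(3) unfolding btw_def by linarith
  qed
qed

lemma sep_mono: assumes "sep Z X" "Z' \<subseteq> Z" "X' \<subseteq> X" shows "sep Z' X'"
  using assms unfolding sep_def sg_def by blast

lemma sep_lt: assumes "\<forall>x\<in>X. \<forall>y\<in>Y. x < y" shows "sep X Y"
  using assms unfolding sep_def sg_def btw_def by force

lemma sep_union:
  assumes "sep Z X1" "sep Z X2" "\<not> sep X1 X2"
  shows "sep Z (X1 \<union> X2)"
proof -
  have d: "Z \<inter> X1 = {}" "Z \<inter> X2 = {}" using assms unfolding sep_def by auto
  have key: "\<exists>a\<in>X1. \<exists>b\<in>X2. sg Z a b"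
  proof (cases "X1 \<inter> X2 = {}")
    case False then show ?thesis using sg_refl by blast
  next
    case True
    then obtain u v x x' where uv: "u \<in> X2" "v \<in> X2" "x \<in> X1" "x' \<in> X1" "btw u v x" "\<not> btw u v x'"
      using assms(3) unfolding sep_def sg_def by blast
    have ne: "x' \<noteq> u" "x' \<noteq> v" using True uv by auto
    show ?thesis
    proof (cases "x' < u \<and> x' < v \<or> x' > u \<and> x' > v")
      case c1: True
      show ?thesis
      proof (cases "x' < u \<and> x' < v")
        case True
        define w where "w = min u v"
        have w: "w \<in> X2" unfolding w_def using uv by (simp add: min_def)
        have "sg Z x' w" unfolding sg_def
        proof (intro ballI impI)
          fix z z' assume z: "z \<in> Z" "z' \<in> Z" "btw x' w z"
          have "btw x' x z \<longleftrightarrow> btw x' x z'" "btw u v z \<longleftrightarrow> btw u v z'"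
            using assms(1,2) z uv unfolding sep_def sg_def by blast+
          moreover have "z \<noteq> u" "z \<noteq> v" "z \<noteq> x" "z' \<noteq> u" "z' \<noteq> v" "z' \<noteq> x" "z \<noteq> x'" "z' \<noteq> x'"
            using d z uv by auto
          ultimately show "btw x' w z'" using z(3) uv(5) True unfolding btw_def w_def min_def
            by (smt (verit))
        qed
        then show ?thesis using uv w by blast
      next
        case False
        then have F: "x' > u \<and> x' > v" using c1 by blast
        define w where "w = max u v"
        have w: "w \<in> X2" unfolding w_def using uv by (simp add: max_def)
        have "sg Z x' w" unfolding sg_def
        proof (intro ballI impI)
          fix z z' assume z: "z \<in> Z" "z' \<in> Z" "btw x' w z"
          have "btw x' x z \<longleftrightarrow> btw x' x z'" "btw u v z \<longleftrightarrow> btw u v z'"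
            using assms(1,2) z uv unfolding sep_def sg_def by blast+
          moreover have "z \<noteq> u" "z \<noteq> v" "z \<noteq> x" "z' \<noteq> u" "z' \<noteq> v" "z' \<noteq> x" "z \<noteq> x'" "z' \<noteq> x'"
            using d z uv by auto
          ultimately show "btw x' w z'" using z(3) uv(5) F unfolding btw_def w_def max_def
            by (smt (verit))
        qed
        then show ?thesis using uv w by blast
      qed
    next
      case False
      then have "btw u v x'" using ne unfolding btw_def by linarith
      then show ?thesis using uv by blast
    qed
  qed
  then obtain a b where ab: "a \<in> X1" "b \<in> X2" "sg Z a b" by blast
  have all: "sg Z u v" if "u \<in> X1 \<union> X2" "v \<in> X1 \<union> X2" for u v
  proof -
    have ga: "sg Z u a" if "u \<in> X1 \<union> X2" for u
    proof (cases "u \<in> X1")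
      case True then show ?thesis using assms(1) ab unfolding sep_def by blast
    next
      case False
      then have "u \<in> X2" using that by blast
      then have "sg Z u b" using assms(2) ab unfolding sep_def by blast
      then show ?thesis using sg_trans[of Z u b a] ab d \<open>u \<in> X2\<close> sg_sym by blast
    qed
    show ?thesis using sg_trans[of Z u a v] ga[OF that(1)] ga[OF that(2)] sg_sym d ab that by blast
  qed
  show ?thesis unfolding sep_def using d all by blast
qed

lemma nonsep_point:
  assumes "finite B" "B \<noteq> {}" "\<not> sep B X"
  shows "\<exists>x\<in>X. Min B \<le> x \<and> x \<le> Max B"
proof (cases "B \<inter> X = {}")
  case False
  then obtain x where "x \<in> B" "x \<in> X" by blast
  then show ?thesis using assms(1) Min_le Max_ge by blast
next
  case True
  then obtain u v z z' where uv: "u \<in> X" "v \<in> X" "z \<in> B" "z' \<in> B" "btw u v z" "\<not> btw u v z'"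
    using assms(3) unfolding sep_def sg_def by blast
  have b: "Min B \<le> z" "z \<le> Max B" "Min B \<le> z'" "z' \<le> Max B" using uv assms(1) by auto
  have "z' \<noteq> u" "z' \<noteq> v" using True uv by auto
  then have "Min B \<le> u \<and> u \<le> Max B \<or> Min B \<le> v \<and> v \<le> Max B"
    using b uv(5,6) unfolding btw_def by linarith
  then show ?thesis using uv by blast
qed

lemma sep_wrap:
  assumes "sep C S" "finite C" "C \<noteq> {}" "b \<in> S" "b < Min C" "s \<in> S"
  shows "s < Min C \<or> s > Max C"
proof (rule ccontr)
  assume a: "\<not> (s < Min C \<or> s > Max C)"
  have m: "Min C \<in> C" "Max C \<in> C" using assms by auto
  have "s \<notin> C" using assms unfolding sep_def by blast
  then have "s \<noteq> Min C" "s \<noteq> Max C" using m by auto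
  then have "btw b s (Min C)" "\<not> btw b s (Max C)" using a assms(5) unfolding btw_def by auto
  then show False using assms(1,4,6) m unfolding sep_def sg_def by blast
qed

definition Inn :: "real \<Rightarrow> real \<Rightarrow> real set \<Rightarrow> bool" where
  "Inn b1 c2 Y \<longleftrightarrow> (\<forall>y\<in>Y. b1 < y \<and> y < c2)"
definition Out :: "real \<Rightarrow> real \<Rightarrow> real set \<Rightarrow> bool" where
  "Out b2 c1 X \<longleftrightarrow> (\<forall>x\<in>X. \<not> (b2 < x \<and> x < c1))"

lemma nest1:
  assumes "sep X Y" "xb \<in> X" "xc \<in> X" "yb \<in> Y" "yc \<in> Y"
    "b1 \<le> xb" "xb \<le> b2" "b1 \<le> yb" "yb \<le> b2" "c1 \<le> xc" "xc \<le> c2" "c1 \<le> yc" "yc \<le> c2" "b2 < c1"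
    "\<forall>x\<in>X. \<not> (yb < x \<and> x < yc)"
  shows "Out b2 c1 X \<and> Inn b1 c2 Y"
proof
  show "Out b2 c1 X" unfolding Out_def using assms(9,12,15) by force
  have d: "X \<inter> Y = {}" using assms(1) unfolding sep_def by blast
  have ne0: "xb \<noteq> yb" "xc \<noteq> yc" using d assms(2-5) by auto
  have "\<not> (yb < xb \<and> xb < yc)" "\<not> (yb < xc \<and> xc < yc)" using assms(15,2,3) by blast+
  then have xb: "xb < yb" and xc: "xc > yc" using ne0 assms(6-14) by linarith+
  show "Inn b1 c2 Y" unfolding Inn_def
  proof
    fix y assume y: "y \<in> Y"
    have ne: "y \<noteq> xb" "y \<noteq> xc" using d y assms by auto
    have s1: "btw yb y xc \<longrightarrow> btw yb y xb" "btw y yc xb \<longrightarrow> btw y yc xc"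
      using assms(1-5) y unfolding sep_def sg_def by blast+
    show "b1 < y \<and> y < c2"
      using s1 ne xb xc assms(6-14) unfolding btw_def by linarith
  qed
qed

lemma nest:
  assumes "sep X Y" "xb \<in> X" "xc \<in> X" "yb \<in> Y" "yc \<in> Y"
    "b1 \<le> xb" "xb \<le> b2" "b1 \<le> yb" "yb \<le> b2" "c1 \<le> xc" "xc \<le> c2" "c1 \<le> yc" "yc \<le> c2" "b2 < c1"
  shows "(Out b2 c1 X \<and> Inn b1 c2 Y) \<or> (Out b2 c1 Y \<and> Inn b1 c2 X)"
proof (cases "\<forall>x\<in>X. \<not> (yb < x \<and> x < yc)")
  case True then show ?thesis using nest1[OF assms] by blast
next
  case False
  then obtain x where x: "x \<in> X" "yb < x" "x < yc" by blast
  have d: "X \<inter> Y = {}" using assms(1) unfolding sep_def by blast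
  have allx: "btw yb yc x' " if "x' \<in> X" for x'
    using assms(1,4,5) x that unfolding sep_def sg_def btw_def by blast
  have "\<forall>y\<in>Y. \<not> (xb < y \<and> y < xc)"
  proof (intro ballI notI)
    fix y assume y: "y \<in> Y" "xb < y \<and> y < xc"
    have "btw xb xc yb" using sep_sym[OF assms(1)] assms(2-5) y unfolding sep_def sg_def btw_def by blast
    then show False using allx[OF assms(2)] allx[OF assms(3)] unfolding btw_def by linarith
  qed
  then show ?thesis using nest1[OF sep_sym[OF assms(1)] assms(4,5,2,3) assms(8,9,6,7,12,13,10,11,14)] by blast
qed

lemma middle_contra:
  assumes "Out b2 c1 (X1 \<union> X2)" "Inn b1 c2 (X1 \<union> X2)"
    "\<forall>x\<in>X1. x < c1 \<or> x > c2" "\<forall>x\<in>X2. x > b2" "\<not> sep X1 X2"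
  shows False
proof -
  have "\<forall>x\<in>X1. x \<le> b2"
  proof
    fix x assume x: "x \<in> X1"
    then have "\<not> (b2 < x \<and> x < c1)" "b1 < x \<and> x < c2" "x < c1 \<or> x > c2"
      using assms(1-3) unfolding Out_def Inn_def by auto
    then show "x \<le> b2" by linarith
  qed
  moreover have "\<forall>x\<in>X2. x \<ge> c1"
  proof
    fix x assume x: "x \<in> X2"
    then have "\<not> (b2 < x \<and> x < c1)" "x > b2"
      using assms(1,4) unfolding Out_def Inn_def by auto
    then show "x \<ge> c1" by linarith
  qed
  moreover have "\<forall>x\<in>X1. \<forall>y\<in>X2. x < y" using calculation assms(4) by force
  ultimately show False using sep_lt assms(5) by blast
qed

lemma sgD: "sg Z u v \<Longrightarrow> z \<in> Z \<Longrightarrow> z' \<in> Z \<Longrightarrow> btw u v z \<longleftrightarrow> btw u v z'"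
  unfolding sg_def by blast

lemma sepD: "sep Z X \<Longrightarrow> u \<in> X \<Longrightarrow> v \<in> X \<Longrightarrow> z \<in> Z \<Longrightarrow> z' \<in> Z \<Longrightarrow> btw u v z \<longleftrightarrow> btw u v z'"
  unfolding sep_def sg_def by blast

lemma sepD2: "sep Z X \<Longrightarrow> u \<in> X \<Longrightarrow> z \<in> Z \<Longrightarrow> u \<noteq> z"
  unfolding sep_def by blast

theorem theta_contra:
  fixes B C L1 L2 M1 M2 R1 R2 :: "real set"
  assumes fin: "finite B" "finite C" "B \<noteq> {}" "C \<noteq> {}"
  and BT: "\<forall>b\<in>B. \<forall>x\<in>C \<union> L2 \<union> M2 \<union> R2. b < x"
  and sCS: "sep C (B \<union> L1 \<union> M1 \<union> R1)"
  and a1: "\<not>sep B L1" "\<not>sep B M1" "\<not>sep B R1"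
  and a2: "\<not>sep C L2" "\<not>sep C M2" "\<not>sep C R2"
  and a3: "\<not>sep L1 L2" "\<not>sep M1 M2" "\<not>sep R1 R2"
  and s: "sep (L1\<union>L2) (M1\<union>M2)" "sep (L1\<union>L2) (R1\<union>R2)" "sep (M1\<union>M2) (R1\<union>R2)"
  shows False
proof -
  define b1 b2 c1 c2 where "b1 = Min B" "b2 = Max B" "c1 = Min C" "c2 = Max C"
  have inB: "b1 \<in> B" "b2 \<in> B" "c1 \<in> C" "c2 \<in> C" using fin unfolding b1_b2_c1_c2_def by auto
  have bc: "b2 < c1" using BT inB by blast
  have b1c: "b1 < Min C" using BT inB unfolding b1_b2_c1_c2_def by blast
  have W: "x < c1 \<or> x > c2" if "x \<in> B \<union> L1 \<union> M1 \<union> R1" for x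
    using sep_wrap[OF sCS fin(2,4), of b1 x] inB b1c that unfolding b1_b2_c1_c2_def by blast
  have T: "x > b2" if "x \<in> C \<union> L2 \<union> M2 \<union> R2" for x using BT inB that by blast
  obtain lb mb rb where pb: "lb \<in> L1" "mb \<in> M1" "rb \<in> R1" "b1 \<le> lb" "lb \<le> b2" "b1 \<le> mb" "mb \<le> b2"
    "b1 \<le> rb" "rb \<le> b2"
    using nonsep_point[OF fin(1,3) a1(1)] nonsep_point[OF fin(1,3) a1(2)] nonsep_point[OF fin(1,3) a1(3)]
    unfolding b1_b2_c1_c2_def by blast
  obtain lc mc rc where pc: "lc \<in> L2" "mc \<in> M2" "rc \<in> R2" "c1 \<le> lc" "lc \<le> c2" "c1 \<le> mc" "mc \<le> c2"
    "c1 \<le> rc" "rc \<le> c2"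
    using nonsep_point[OF fin(2,4) a2(1)] nonsep_point[OF fin(2,4) a2(2)] nonsep_point[OF fin(2,4) a2(3)]
    unfolding b1_b2_c1_c2_def by blast
  have n1: "(Out b2 c1 (L1\<union>L2) \<and> Inn b1 c2 (M1\<union>M2)) \<or> (Out b2 c1 (M1\<union>M2) \<and> Inn b1 c2 (L1\<union>L2))"
    by (rule nest[OF s(1), of lb lc mb mc]) (use pb pc bc in auto)
  have n2: "(Out b2 c1 (L1\<union>L2) \<and> Inn b1 c2 (R1\<union>R2)) \<or> (Out b2 c1 (R1\<union>R2) \<and> Inn b1 c2 (L1\<union>L2))"
    by (rule nest[OF s(2), of lb lc rb rc]) (use pb pc bc in auto)
  have n3: "(Out b2 c1 (M1\<union>M2) \<and> Inn b1 c2 (R1\<union>R2)) \<or> (Out b2 c1 (R1\<union>R2) \<and> Inn b1 c2 (M1\<union>M2))"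
    by (rule nest[OF s(3), of mb mc rb rc]) (use pb pc bc in auto)
  have W1: "\<forall>x\<in>L1. x < c1 \<or> x > c2" "\<forall>x\<in>M1. x < c1 \<or> x > c2" "\<forall>x\<in>R1. x < c1 \<or> x > c2"
    using W by auto
  have T2: "\<forall>x\<in>L2. x > b2" "\<forall>x\<in>M2. x > b2" "\<forall>x\<in>R2. x > b2" using T by auto
  from n1 n2 n3 have "(Out b2 c1 (L1\<union>L2) \<and> Inn b1 c2 (L1\<union>L2)) \<or> (Out b2 c1 (M1\<union>M2) \<and> Inn b1 c2 (M1\<union>M2))
     \<or> (Out b2 c1 (R1\<union>R2) \<and> Inn b1 c2 (R1\<union>R2))" by blast
  then show False
    using middle_contra[OF _ _ W1(1) T2(1) a3(1)] middle_contra[OF _ _ W1(2) T2(2) a3(2)]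
      middle_contra[OF _ _ W1(3) T2(3) a3(3)] by blast
qed

definition rho :: "real \<Rightarrow> real \<Rightarrow> real" where
  "rho t x = (if x < t then x + 2*pi else x)"

lemma rot_exists:
  assumes "finite Z" "Z \<noteq> {}" "X \<noteq> {}" "sep Z X" "\<forall>x\<in>Z\<union>X. -pi < x \<and> x \<le> pi"
  shows "\<exists>t\<in>Z. \<forall>z\<in>Z. \<forall>x\<in>X. rho t z < rho t x"
proof -
  obtain x0 where x0: "x0 \<in> X" using assms(3) by blast
  have ne: "z \<noteq> x" if "z \<in> Z" "x \<in> X" for z x using sepD2[OF assms(4) that(2,1)] by auto
  have bnd: "-pi < x \<and> x \<le> pi" if "x \<in> Z \<union> X" for x using assms(5) that by blast
  show ?thesis
  proof (cases "\<exists>z\<in>Z. z > x0")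
    case True
    define t where "t = Min {z\<in>Z. z > x0}"
    have fin: "finite {z\<in>Z. z > x0}" using assms(1) by simp
    have tZ: "t \<in> Z" "t > x0" using Min_in[OF fin] True unfolding t_def by auto
    have tmin: "\<not> (x0 < z \<and> z < t)" if "z \<in> Z" for z using Min_le[OF fin] that unfolding t_def by force
    have "\<forall>z\<in>Z. \<forall>x\<in>X. rho t z < rho t x"
    proof (intro ballI)
      fix z x assume zx: "z \<in> Z" "x \<in> X"
      have e1: "btw x x0 z \<longleftrightarrow> btw x x0 t" "btw x0 x z \<longleftrightarrow> btw x0 x t"
        using sepD[OF assms(4) zx(2) x0 zx(1) tZ(1)] sepD[OF assms(4) x0 zx(2) zx(1) tZ(1)] by auto
      have "z \<noteq> x" "z \<noteq> x0" "t \<noteq> x" using ne zx x0 tZ by auto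
      moreover have "-pi < z" "z \<le> pi" "-pi < x" "x \<le> pi" using bnd zx by auto
      ultimately show "rho t z < rho t x" using e1 tmin[OF zx(1)] tZ(2) pi_gt_zero unfolding rho_def btw_def
        by (smt (verit))
    qed
    then show ?thesis using tZ by blast
  next
    case False
    define t where "t = Min Z"
    have tZ: "t \<in> Z" "\<forall>z\<in>Z. t \<le> z" using assms(1,2) unfolding t_def by auto
    have "\<forall>z\<in>Z. \<forall>x\<in>X. rho t z < rho t x"
    proof (intro ballI)
      fix z x assume zx: "z \<in> Z" "x \<in> X"
      have e1: "btw x x0 z \<longleftrightarrow> btw x x0 t"
        using sepD[OF assms(4) zx(2) x0 zx(1) tZ(1)] by auto
      have "z \<noteq> x" "z \<noteq> x0" "t \<noteq> x" "z \<le> x0" "t \<le> z" using ne zx x0 tZ False by auto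
      moreover have "-pi < z" "z \<le> pi" "-pi < x" "x \<le> pi" using bnd zx by auto
      ultimately show "rho t z < rho t x" using e1 pi_gt_zero unfolding rho_def btw_def
        by (smt (verit))
    qed
    then show ?thesis using tZ by blast
  qed
qed




definition angrep :: "real^2 \<Rightarrow> real \<Rightarrow> (real^2 \<Rightarrow> real) \<Rightarrow> bool" where
  "angrep c r th \<longleftrightarrow> (\<forall>p\<in>sphere c r. p$1 = c$1 + r * cos (th p) \<and> p$2 = c$2 + r * sin (th p)) \<and>
     (\<forall>p\<in>sphere c r. \<forall>q\<in>sphere c r. th p - th q < 2*pi)"

lemma angrepD: "angrep c r th \<Longrightarrow> p \<in> sphere c r \<Longrightarrow> p$1 = c$1 + r * cos (th p) \<and> p$2 = c$2 + r * sin (th p)"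
  unfolding angrep_def by blast

lemma ang_inj: assumes "angrep c r th" "p \<in> sphere c r" "q \<in> sphere c r" "th p = th q" shows "p = q"
  using angrepD[OF assms(1,2)] angrepD[OF assms(1,3)] assms(4) unfolding vec_eq_iff forall_2 by simp

lemma ang_cr_pos:
  assumes "angrep c r th" "r > 0" "p \<in> sphere c r" "q \<in> sphere c r" "s \<in> sphere c r"
    "th p < th q" "th q < th s"
  shows "cr p q s > 0"
proof -
  have "th s - th p < 2*pi" using assms(1,3,5) unfolding angrep_def by blast
  then show ?thesis
    using cr_pos[of p "c$1" r "th p" "c$2" q "th q" s "th s"] angrepD[OF assms(1)] assms by blast
qed

lemma cr_self: "cr a b a = 0" "cr a b b = 0" unfolding cr_def by simp_all

lemma chord:
  assumes "angrep c r th" "r > 0" "p1 \<in> sphere c r" "q1 \<in> sphere c r" "p2 \<in> sphere c r" "q2 \<in> sphere c r"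
    "th p1 < th q1" "th q1 < th p2" "th p2 < th q2"
  shows "convex hull {p1,p2} \<inter> convex hull {q1,q2} \<noteq> {}"
proof (rule seg_meet)
  have "cr p1 q1 q2 > 0" by (rule ang_cr_pos[OF assms(1-4,6)]) (use assms in linarith)+
  then show "cr q1 q2 p1 > 0" using cr_cyc(1)[of p1 q1 q2] by simp
  have "cr q1 p2 q2 > 0" by (rule ang_cr_pos[OF assms(1,2,4,5,6)]) (use assms in linarith)+
  then show "cr q1 q2 p2 < 0" using cr_cyc(2)[of q1 p2 q2] by simp
  have "cr p1 q1 p2 > 0" by (rule ang_cr_pos[OF assms(1-5)]) (use assms in linarith)+
  then show "cr p1 p2 q1 < 0" using cr_cyc(2)[of p1 q1 p2] by simp
  show "cr p1 p2 q2 > 0" by (rule ang_cr_pos[OF assms(1,2,3,5,6)]) (use assms in linarith)+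
qed

lemma cr_lin: "u + v = 1 \<Longrightarrow> cr a b (u *\<^sub>R x + v *\<^sub>R y) = u * cr a b x + v * cr a b y"
proof -
  assume "u + v = 1" then have v: "v = 1 - u" by simp
  show ?thesis unfolding v cr_def by (simp add: algebra_simps)
qed

lemma convex_cr_neg: "convex {q. cr a b q < 0}"
  unfolding convex_def
proof (intro ballI allI impI)
  fix x y u v assume h: "x \<in> {q. cr a b q < 0}" "y \<in> {q. cr a b q < 0}" "(0::real) \<le> u" "0 \<le> v" "u + v = 1"
  have "u * cr a b x + v * cr a b y < 0"
  proof (cases "u = 0")
    case True then show ?thesis using h by simp
  next
    case False then have "u * cr a b x < 0" using h by (simp add: mult_pos_neg)
    moreover have "v * cr a b y \<le> 0" using h by (simp add: mult_nonneg_nonpos)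
    ultimately show ?thesis by linarith
  qed
  then show "u *\<^sub>R x + v *\<^sub>R y \<in> {q. cr a b q < 0}" using cr_lin[OF h(5)] by simp
qed

lemma convex_cr_nonneg: "convex {q. 0 \<le> cr a b q}"
  unfolding convex_def
proof (intro ballI allI impI)
  fix x y u v assume h: "x \<in> {q. 0 \<le> cr a b q}" "y \<in> {q. 0 \<le> cr a b q}" "(0::real) \<le> u" "0 \<le> v" "u + v = 1"
  have "0 \<le> u * cr a b x + v * cr a b y" using h by simp
  then show "u *\<^sub>R x + v *\<^sub>R y \<in> {q. 0 \<le> cr a b q}" using cr_lin[OF h(5)] by simp
qed

lemma hull_sep_line:
  assumes "\<forall>q\<in>Py. cr a b q < 0" "\<forall>q\<in>Px. 0 \<le> cr a b q"
  shows "convex hull Px \<inter> convex hull Py = {}"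
proof -
  have "convex hull Py \<subseteq> {q. cr a b q < 0}" by (rule hull_minimal) (use assms convex_cr_neg in auto)
  moreover have "convex hull Px \<subseteq> {q. 0 \<le> cr a b q}" by (rule hull_minimal) (use assms convex_cr_nonneg in auto)
  ultimately show ?thesis by fastforce
qed

lemma cr_all: "cr b q a = cr a b q" "cr q a b = cr a b q" "cr b a q = - cr a b q" "cr a q b = - cr a b q" "cr q b a = - cr a b q"
  unfolding cr_def by algebra+

lemma hull_disj_sep:
  assumes "angrep c r th" "r>0" "Px \<subseteq> sphere c r" "Py \<subseteq> sphere c r" "convex hull Px \<inter> convex hull Py = {}"
  shows "sep (th`Px) (th`Py)"
proof (rule ccontr)
  assume ns: "\<not> sep (th`Px) (th`Py)"
  have key: False if "p1\<in>S1" "q1\<in>S2" "p2\<in>S1" "q2\<in>S2" "th p1 < th q1" "th q1 < th p2" "th p2 < th q2"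
     "S1 = Px \<and> S2 = Py \<or> S1 = Py \<and> S2 = Px" for p1 q1 p2 q2 S1 S2
  proof -
    have sub: "S1 \<subseteq> sphere c r" "S2 \<subseteq> sphere c r" using that(8) assms(3,4) by auto
    have "convex hull {p1,p2} \<inter> convex hull {q1,q2} \<noteq> {}"
      by (rule chord[OF assms(1,2)]) (use that sub in auto)
    moreover have "convex hull {p1,p2} \<subseteq> convex hull S1" by (rule hull_mono) (use that in auto)
    moreover have "convex hull {q1,q2} \<subseteq> convex hull S2" by (rule hull_mono) (use that in auto)
    ultimately show False using that(8) assms(5) by blast
  qed
  show False
  proof (cases "th`Px \<inter> th`Py = {}")
    case False
    then obtain p q where pq: "p\<in>Px" "q\<in>Py" "th p = th q" by auto
    then have "p = q" using ang_inj[OF assms(1)] assms(3,4) by blast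
    then show False using assms(5) pq hull_subset[of Px convex] hull_subset[of Py convex] by blast
  next
    case True
    then obtain u v z z' where uv: "u\<in>Py" "v\<in>Py" "z\<in>Px" "z'\<in>Px" "btw (th u) (th v) (th z)" "\<not>btw (th u) (th v) (th z')"
      using ns unfolding sep_def sg_def by blast
    have ne: "th z' \<noteq> th u" "th z' \<noteq> th v" using True uv by blast+
    show False
    proof (cases "th u < th v")
      case True
      then have "th u < th z" "th z < th v" using uv(5) unfolding btw_def by auto
      moreover have "th z' < th u \<or> th z' > th v" using uv(6) ne True unfolding btw_def by auto
      ultimately show False
        using key[of z' Px u Py z v] key[of u Py z Px v z'] uv by blast
    next
      case False
      then have "th v < th z" "th z < th u" using uv(5) unfolding btw_def by auto
      moreover have "th z' < th v \<or> th z' > th u" using uv(6) ne False unfolding btw_def by auto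
      ultimately show False
        using key[of z' Px v Py z u] key[of v Py z Px u z'] uv by blast
    qed
  qed
qed

lemma sphere_norm: "p \<in> sphere c r \<Longrightarrow> norm (p - c) = r"
  by (simp add: dist_norm norm_minus_commute)

lemma sep_hull_disj:
  assumes "angrep c r th" "r>0" "Px \<subseteq> sphere c r" "Py \<subseteq> sphere c r" "finite Px" "Px \<noteq> {}" "Py \<noteq> {}"
    "sep (th`Px) (th`Py)"
  shows "convex hull Px \<inter> convex hull Py = {}"
proof -
  have dis: "th p \<noteq> th q" if "p \<in> Px" "q \<in> Py" for p q using assms(8) that unfolding sep_def by blast
  have inj: "p = q" if "p \<in> sphere c r" "q \<in> sphere c r" "th p = th q" for p q
    using ang_inj[OF assms(1) that] .
  show ?thesis
  proof (cases "\<exists>p. Px = {p}")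
    case True
    then obtain p where p: "Px = {p}" by blast
    have pS: "p \<in> sphere c r" using p assms(3) by auto
    define H where "H = {x. inner (p - c) x < inner (p - c) p}"
    have "Py \<subseteq> H"
    proof
      fix q assume q: "q \<in> Py"
      then have qS: "q \<in> sphere c r" using assms(4) by auto
      have "q \<noteq> p" using dis[of p q] p q by auto
      then have gt: "0 < inner (q - p) (q - p)" by simp
      have "q - p = (q - c) - (p - c)" by simp
      then have "inner (q - p) (q - p) = inner (q - c) (q - c) - 2 * inner (p - c) (q - c) + inner (p - c) (p - c)"
        by (simp add: inner_diff_left inner_diff_right inner_commute)
      moreover have "inner (q - c) (q - c) = r^2" "inner (p - c) (p - c) = r^2"
        using sphere_norm[OF qS] sphere_norm[OF pS] by (simp_all add: power2_norm_eq_inner[symmetric])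
      ultimately have "inner (p - c) (q - c) < inner (p - c) (p - c)" using gt by linarith
      then show "q \<in> H" unfolding H_def by (simp add: inner_diff_right)
    qed
    then have "convex hull Py \<subseteq> H" by (rule hull_minimal) (simp add: H_def convex_halfspace_lt)
    moreover have "p \<notin> H" unfolding H_def by simp
    ultimately show ?thesis using p by auto
  next
    case False
    define X Y where "X = th`Px" "Y = th`Py"
    have finX: "finite X" "X \<noteq> {}" using assms(5,6) unfolding X_Y_def by auto
    obtain p1 p2 where p12: "p1 \<in> Px" "p2 \<in> Px" "p1 \<noteq> p2" using False assms(6) by blast
    have "th p1 \<noteq> th p2" using p12 inj assms(3) by blast
    moreover have "Min X \<le> th p1" "Min X \<le> th p2" "th p1 \<le> Max X" "th p2 \<le> Max X"
      using finX p12 unfolding X_Y_def by auto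
    ultimately have ab: "Min X < Max X" by linarith
    obtain pa where pa: "pa \<in> Px" "th pa = Min X" using Min_in[OF finX] unfolding X_Y_def by auto
    obtain pb where pb: "pb \<in> Px" "th pb = Max X" using Max_in[OF finX] unfolding X_Y_def by auto
    obtain q0 where q0: "q0 \<in> Py" using assms(7) by blast
    have S: "q \<in> sphere c r" if "q \<in> Px \<union> Py" for q using that assms(3,4) by blast
    have sepXY: "sep X Y" using assms(8) unfolding X_Y_def .
    show ?thesis
    proof (cases "Min X < th q0 \<and> th q0 < Max X")
      case True
      define A where "A = {x\<in>X. x < th q0}"
      define A' where "A' = {x\<in>X. x > th q0}"
      have mm: "Min X \<in> A" "Max X \<in> A'" using True Min_in[OF finX] Max_in[OF finX] unfolding A_def A'_def by auto
      have finA: "finite A" "A \<noteq> {}" "finite A'" "A' \<noteq> {}"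
        using finX(1) mm by (auto simp: A_def A'_def)
      obtain p3 where p3: "p3 \<in> Px" "th p3 = Max A" using Max_in[OF finA(1,2)] unfolding A_def X_Y_def by auto
      obtain p4 where p4: "p4 \<in> Px" "th p4 = Min A'" using Min_in[OF finA(3,4)] unfolding A'_def X_Y_def by auto
      have o: "th p3 < th q0" "th q0 < th p4" using p3 p4 Max_in[OF finA(1,2)] Min_in[OF finA(3,4)]
        unfolding A_def A'_def by auto
      have gapX: "th x \<le> th p3 \<or> th x \<ge> th p4" if "x \<in> Px" for x
      proof -
        have "th x \<noteq> th q0" using dis that q0 by blast
        then have "th x \<in> A \<or> th x \<in> A'" using that unfolding A_def A'_def X_Y_def by auto
        then show ?thesis using p3 p4 Max_ge[OF finA(1)] Min_le[OF finA(3)] by auto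
      qed
      have inY: "th p3 < th y \<and> th y < th p4" if "y \<in> Py" for y
      proof -
        have e: "btw (th q0) (th y) (th p3) \<longleftrightarrow> btw (th q0) (th y) (th p4)"
          using sepD[OF sepXY, of "th q0" "th y" "th p3" "th p4"] q0 that p3 p4 unfolding X_Y_def by blast
        have "th y \<noteq> th p3" "th y \<noteq> th p4" using dis that p3 p4 by metis+
        then show ?thesis using e o unfolding btw_def by linarith
      qed
      show ?thesis
      proof (rule hull_sep_line[of Py p3 p4])
        show "\<forall>q\<in>Py. cr p3 p4 q < 0"
        proof
          fix q assume q: "q \<in> Py"
          have "cr p3 q p4 > 0" using ang_cr_pos[OF assms(1,2), of p3 q p4] inY[OF q] S p3 p4 q by blast
          then show "cr p3 p4 q < 0" using cr_all(4)[where a=p3 and b=p4 and q=q] by simp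
        qed
        show "\<forall>q\<in>Px. 0 \<le> cr p3 p4 q"
        proof
          fix q assume q: "q \<in> Px"
          consider "th q < th p3" | "th q = th p3" | "th q = th p4" | "th q > th p4" using gapX[OF q] by linarith
          then show "0 \<le> cr p3 p4 q"
          proof cases
            case 1 then have "cr q p3 p4 > 0" using ang_cr_pos[OF assms(1,2), of q p3 p4] o S p3 p4 q by force
            then show ?thesis using cr_all(2)[where a=p3 and b=p4 and q=q] by simp
          next
            case 2 then have "q = p3" using inj S q p3 by blast
            then show ?thesis using cr_self by simp
          next
            case 3 then have "q = p4" using inj S q p4 by blast
            then show ?thesis using cr_self by simp
          next
            case 4 then have "cr p3 p4 q > 0" using ang_cr_pos[OF assms(1,2), of p3 p4 q] o S p3 p4 q by force
            then show ?thesis by simp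
          qed
        qed
      qed
    next
      case False
      have ne0: "th q0 \<noteq> Min X" "th q0 \<noteq> Max X" using dis pa pb q0 by metis+
      have outY: "th y < Min X \<or> th y > Max X" if "y \<in> Py" for y
      proof -
        have e: "btw (th q0) (th y) (Min X) \<longleftrightarrow> btw (th q0) (th y) (Max X)"
          using sepD[OF sepXY, of "th q0" "th y" "Min X" "Max X"] q0 that Min_in[OF finX] Max_in[OF finX]
          unfolding X_Y_def by blast
        have "th y \<noteq> Min X" "th y \<noteq> Max X" using dis that pa pb by metis+
        then show ?thesis using e ab False ne0 unfolding btw_def by linarith
      qed
      have inX: "Min X \<le> th x \<and> th x \<le> Max X" if "x \<in> Px" for x
        using that finX unfolding X_Y_def by auto
      show ?thesis
      proof (rule hull_sep_line[of Py pb pa])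
        show "\<forall>q\<in>Py. cr pb pa q < 0"
        proof
          fix q assume q: "q \<in> Py"
          consider "th q < Min X" | "th q > Max X" using outY[OF q] by blast
          then show "cr pb pa q < 0"
          proof cases
            case 1 then have "cr q pa pb > 0" using ang_cr_pos[OF assms(1,2), of q pa pb] ab S pa pb q by force
            then show ?thesis using cr_all(5)[where a=pb and b=pa and q=q] by simp
          next
            case 2 then have "cr pa pb q > 0" using ang_cr_pos[OF assms(1,2), of pa pb q] ab S pa pb q by force
            then show ?thesis using cr_all(3)[where a=pa and b=pb and q=q] by simp
          qed
        qed
        show "\<forall>q\<in>Px. 0 \<le> cr pb pa q"
        proof
          fix q assume q: "q \<in> Px"
          consider "th q = Min X" | "th q = Max X" | "Min X < th q \<and> th q < Max X" using inX[OF q] by linarith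
          then show "0 \<le> cr pb pa q"
          proof cases
            case 1 then have "q = pa" using inj[of q pa] S[of q] S[of pa] q pa by simp
            then show ?thesis using cr_self by simp
          next
            case 2 then have "q = pb" using inj[of q pb] S[of q] S[of pb] q pb by simp
            then show ?thesis using cr_self by simp
          next
            case 3 then have "cr pa q pb > 0" using ang_cr_pos[OF assms(1,2), of pa q pb] S pa pb q by force
            then show ?thesis using cr_all(1)[where a=pb and b=pa and q=q] by simp
          qed
        qed
      qed
    qed
  qed
qed

definition th0 :: "real^2 \<Rightarrow> real^2 \<Rightarrow> real" where
  "th0 c p = Arg (Complex (p$1 - c$1) (p$2 - c$2))"

lemma th0_rep:
  assumes "p \<in> sphere c r"
  shows "p$1 = c$1 + r * cos (th0 c p) \<and> p$2 = c$2 + r * sin (th0 c p)"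
proof -
  define z where "z = Complex (p$1 - c$1) (p$2 - c$2)"
  have "norm (p - c) = r" using assms by (simp add: dist_norm norm_minus_commute)
  then have "sqrt ((p$1 - c$1)^2 + (p$2 - c$2)^2) = r"
    by (simp add: norm_eq_sqrt_inner inner_vec_def sum_2 power2_eq_square)
  then have cz: "cmod z = r" unfolding z_def complex_norm by simp
  have "Re z = Re (rcis (cmod z) (Arg z))" "Im z = Im (rcis (cmod z) (Arg z))" by (simp_all only: rcis_cmod_Arg)
  then show ?thesis unfolding th0_def z_def[symmetric] using cz by (simp add: z_def)
qed

lemma th0_bnd: "-pi < th0 c p \<and> th0 c p \<le> pi"
  unfolding th0_def by (rule Arg_bounded)

lemma angrep_th0: "angrep c r (th0 c)"
  unfolding angrep_def using th0_rep th0_bnd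
  by (smt (verit, best) ball_empty)

lemma angrep_rot:
  assumes "-pi < t" "t \<le> pi"
  shows "angrep c r (\<lambda>p. rho t (th0 c p))"
proof -
  have 1: "p$1 = c$1 + r * cos (rho t (th0 c p)) \<and> p$2 = c$2 + r * sin (rho t (th0 c p))"
    if p: "p \<in> sphere c r" for p
    using th0_rep[OF p] unfolding rho_def by simp
  have 2: "rho t (th0 c p) - rho t (th0 c q) < 2*pi" for p q
    using th0_bnd[of c p] th0_bnd[of c q] assms unfolding rho_def by auto
  show ?thesis unfolding angrep_def using 1 2 by blast
qed

lemma nonsep_mono: "\<not> sep X Y \<Longrightarrow> X \<subseteq> X' \<Longrightarrow> Y \<subseteq> Y' \<Longrightarrow> \<not> sep X' Y'"
  using sep_mono by blast

lemma sep_path: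
  assumes "\<forall>w\<in>{a..b}. sep Z (F w)" "\<forall>w. a \<le> w \<and> w < b \<longrightarrow> \<not> sep (F w) (F (Suc w))" "a \<le> b"
  shows "sep Z (\<Union>w\<in>{a..b}. F w)"
  using assms(3)
proof (induction b rule: dec_induct)
  case base then show ?case using assms(1,3) by simp
next
  case (step m)
  have u: "(\<Union>w\<in>{a..Suc m}. F w) = (\<Union>w\<in>{a..m}. F w) \<union> F (Suc m)"
  proof -
    have "{a..Suc m} = insert (Suc m) {a..m}" using step(1) by auto
    then show ?thesis by auto
  qed
  have "\<not> sep (\<Union>w\<in>{a..m}. F w) (F (Suc m))"
    by (rule nonsep_mono[of "F m" "F (Suc m)"]) (use assms(2) step in auto)
  then show ?case unfolding u using sep_union step assms(1,3) by simp
qed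



lemma nonsep_sym: "\<not> sep X Y \<Longrightarrow> \<not> sep Y X" using sep_sym by blast

lemma stage:
  fixes B C A D ai bi aj bj lo hi :: nat and V :: "nat set" and P :: "nat \<Rightarrow> (real^2) set"
  assumes ar: "angrep c r th" "r>0"
  and PV: "\<forall>x\<in>V. finite (P x) \<and> P x \<noteq> {} \<and> P x \<subseteq> sphere c r"
  and H: "\<forall>x\<in>V. \<forall>y\<in>V. x \<noteq> y \<longrightarrow> (adj x y \<longleftrightarrow> convex hull P x \<inter> convex hull P y \<noteq> {})"
  and inV: "B\<in>V" "C\<in>V" "A\<in>V" "D\<in>V" "ai\<in>V" "bi\<in>V" "aj\<in>V" "bj\<in>V" "{lo..hi} \<subseteq> V" "lo < hi"
  and e: "B\<noteq>lo \<and> adj B lo" "\<forall>w. lo \<le> w \<and> w < hi \<longrightarrow> adj w (Suc w)" "hi \<noteq> C \<and> adj hi C"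
    "B \<noteq> bi \<and> adj B bi" "bi\<noteq>aj \<and> adj bi aj" "aj\<noteq>C \<and> adj aj C"
    "B\<noteq>A \<and> adj B A" "A \<noteq> ai \<and> adj A ai" "ai \<noteq> bj \<and> adj ai bj" "bj \<noteq> D \<and> adj bj D" "D \<noteq> C \<and> adj D C"
  and n: "B \<noteq> C \<and> \<not> adj B C" "\<forall>w\<in>{Suc lo..hi}. B \<noteq> w \<and> \<not> adj B w"
    "B \<noteq> aj \<and> \<not> adj B aj" "B \<noteq> ai \<and> \<not> adj B ai" "B \<noteq> bj \<and> \<not> adj B bj" "B \<noteq> D \<and> \<not> adj B D"
    "C \<noteq> lo \<and> \<not> adj C lo" "C \<noteq> bi \<and> \<not> adj C bi" "C \<noteq> A \<and> \<not> adj C A"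
    "\<forall>w\<in>{lo..hi}. w \<noteq> bi \<and> \<not> adj w bi \<and> w \<noteq> aj \<and> \<not> adj w aj \<and> w \<noteq> A \<and> \<not> adj w A \<and>
        w \<noteq> ai \<and> \<not> adj w ai \<and> w \<noteq> bj \<and> \<not> adj w bj \<and> w \<noteq> D \<and> \<not> adj w D"
    "bi \<noteq> A \<and> \<not> adj bi A" "bi \<noteq> ai \<and> \<not> adj bi ai" "bi \<noteq> bj \<and> \<not> adj bi bj" "bi \<noteq> D \<and> \<not> adj bi D"
    "aj \<noteq> A \<and> \<not> adj aj A" "aj \<noteq> ai \<and> \<not> adj aj ai" "aj \<noteq> bj \<and> \<not> adj aj bj" "aj \<noteq> D \<and> \<not> adj aj D"
  shows "sep (th`P B) (th`P C \<union> (\<Union>w\<in>{Suc lo..hi}. th`P w) \<union> th`P aj \<union> (th`P ai \<union> th`P bj \<union> th`P D))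
   \<and> sep (th`P C) (th`P B \<union> th`P lo \<union> th`P bi \<union> th`P A)
   \<and> \<not> sep (th`P B) (th`P lo) \<and> \<not> sep (th`P B) (th`P bi) \<and> \<not> sep (th`P B) (th`P A)
   \<and> \<not> sep (th`P C) (\<Union>w\<in>{Suc lo..hi}. th`P w) \<and> \<not> sep (th`P C) (th`P aj)
   \<and> \<not> sep (th`P C) (th`P ai \<union> th`P bj \<union> th`P D)
   \<and> \<not> sep (th`P lo) (\<Union>w\<in>{Suc lo..hi}. th`P w) \<and> \<not> sep (th`P bi) (th`P aj)
   \<and> \<not> sep (th`P A) (th`P ai \<union> th`P bj \<union> th`P D)
   \<and> sep (th`P lo \<union> (\<Union>w\<in>{Suc lo..hi}. th`P w)) (th`P bi \<union> th`P aj)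
   \<and> sep (th`P lo \<union> (\<Union>w\<in>{Suc lo..hi}. th`P w)) (th`P A \<union> (th`P ai \<union> th`P bj \<union> th`P D))
   \<and> sep (th`P bi \<union> th`P aj) (th`P A \<union> (th`P ai \<union> th`P bj \<union> th`P D))"
proof -
  define S where "S v = th ` P v" for v
  have E: "\<not> sep (S x) (S y)" if "x\<in>V" "y\<in>V" "x\<noteq>y" "adj x y" for x y
  proof
    assume "sep (S x) (S y)"
    then have "convex hull P x \<inter> convex hull P y = {}"
      using sep_hull_disj[OF ar, of "P x" "P y"] PV that(1,2) unfolding S_def by blast
    then show False using H that by blast
  qed
  have N: "sep (S x) (S y)" if "x\<in>V" "y\<in>V" "x\<noteq>y" "\<not> adj x y" for x y
    using hull_disj_sep[OF ar, of "P x" "P y"] PV H that unfolding S_def by blast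
  have loV: "lo \<in> V" "hi \<in> V" using inV(9,10) by auto
  have wV: "w \<in> V" if "w \<in> {lo..hi}" for w using inV(9) that by blast
  define L2 where "L2 = (\<Union>w\<in>{Suc lo..hi}. S w)"
  define LL where "LL = (\<Union>w\<in>{lo..hi}. S w)"
  define R2 where "R2 = S ai \<union> S bj \<union> S D"
  define MM where "MM = S bi \<union> S aj"
  have LL: "LL = S lo \<union> L2"
  proof -
    have "{lo..hi} = insert lo {Suc lo..hi}" using inV(10) by auto
    then show ?thesis unfolding LL_def L2_def by auto
  qed
  have eS: "\<not> sep (S w) (S (Suc w))" if "lo \<le> w \<and> w < hi" for w
    using E[of w "Suc w"] e(2) that wV by auto
  have eS2: "\<forall>w. Suc lo \<le> w \<and> w < hi \<longrightarrow> \<not> sep (S w) (S (Suc w))" using eS by auto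
  have eS1: "\<forall>w. lo \<le> w \<and> w < hi \<longrightarrow> \<not> sep (S w) (S (Suc w))" using eS by auto
  have "hi \<in> {Suc lo..hi}" using inV(10) by simp
  then have hiL2: "S hi \<subseteq> L2" unfolding L2_def by blast
  have e_ai_bj: "\<not> sep (S ai) (S bj)" using E e(9) inV by blast
  have e_bj_D: "\<not> sep (S bj) (S D)" using E e(10) inV by blast
  have e_A_ai: "\<not> sep (S A) (S ai)" using E e(8) inV by blast
  have e_bi_aj: "\<not> sep (S bi) (S aj)" using E e(5) inV by blast
  have sepR2: "sep Z R2" if "sep Z (S ai)" "sep Z (S bj)" "sep Z (S D)" for Z
  proof -
    have "sep Z (S ai \<union> S bj)" using sep_union that e_ai_bj by blast
    moreover have "\<not> sep (S ai \<union> S bj) (S D)" by (rule nonsep_mono[OF e_bj_D]) auto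
    ultimately show ?thesis unfolding R2_def using sep_union that by blast
  qed
  have sepRR: "sep Z (S A \<union> R2)" if "sep Z (S A)" "sep Z (S ai)" "sep Z (S bj)" "sep Z (S D)" for Z
  proof -
    have "\<not> sep (S A) R2" by (rule nonsep_mono[OF e_A_ai]) (auto simp: R2_def)
    then show ?thesis using sep_union sepR2 that by blast
  qed
  have sepMM: "sep Z MM" if "sep Z (S bi)" "sep Z (S aj)" for Z
    unfolding MM_def using sep_union that e_bi_aj by blast
  have c1: "sep (S B) (S C \<union> L2 \<union> S aj \<union> R2)"
  proof -
    have s1: "sep (S B) (S C)" using N n(1) inV by blast
    have s2: "sep (S B) L2" unfolding L2_def
      by (rule sep_path) (use N n(2) inV wV eS2 inV(10) in auto)
    have s3: "sep (S B) (S aj)" using N n(3) inV by blast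
    have s4: "sep (S B) R2" using sepR2 N n(4,5,6) inV by blast
    have a1: "\<not> sep (S C) L2" by (rule nonsep_mono[OF nonsep_sym[OF E[of hi C]] _ hiL2]) (use e(3) loV inV in auto)
    have a2: "\<not> sep (S C \<union> L2) (S aj)" by (rule nonsep_mono[OF nonsep_sym[OF E[of aj C]]]) (use e(6) inV in auto)
    have a3: "\<not> sep (S C \<union> L2 \<union> S aj) R2" by (rule nonsep_mono[OF nonsep_sym[OF E[of D C]]]) (use e(11) inV in \<open>auto simp: R2_def\<close>)
    show ?thesis using sep_union[OF sep_union[OF sep_union[OF s1 s2 a1] s3 a2] s4 a3] .
  qed
  have c2: "sep (S C) (S B \<union> S lo \<union> S bi \<union> S A)"
  proof -
    have s1: "sep (S C) (S B)" using sep_sym N n(1) inV by blast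
    have s2: "sep (S C) (S lo)" using N n(7) inV loV by blast
    have s3: "sep (S C) (S bi)" using N n(8) inV by blast
    have s4: "sep (S C) (S A)" using N n(9) inV by blast
    have a1: "\<not> sep (S B) (S lo)" using E e(1) inV loV by blast
    have a2: "\<not> sep (S B \<union> S lo) (S bi)" by (rule nonsep_mono[OF E[of B bi]]) (use e(4) inV in auto)
    have a3: "\<not> sep (S B \<union> S lo \<union> S bi) (S A)" by (rule nonsep_mono[OF E[of B A]]) (use e(7) inV in auto)
    show ?thesis using sep_union[OF sep_union[OF sep_union[OF s1 s2 a1] s3 a2] s4 a3] .
  qed
  have c3: "\<not> sep (S B) (S lo)" "\<not> sep (S B) (S bi)" "\<not> sep (S B) (S A)" "\<not> sep (S bi) (S aj)"
    using E e(1,4,7,5) inV loV by blast+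
  have c4: "\<not> sep (S C) L2" by (rule nonsep_mono[OF nonsep_sym[OF E[of hi C]] _ hiL2]) (use e(3) loV inV in auto)
  have c5: "\<not> sep (S C) (S aj)" using nonsep_sym E e(6) inV by blast
  have c6: "\<not> sep (S C) R2" by (rule nonsep_mono[OF nonsep_sym[OF E[of D C]]]) (use e(11) inV in \<open>auto simp: R2_def\<close>)
  have c7: "\<not> sep (S lo) L2"
  proof (rule nonsep_mono[OF eS[of lo]])
    have "Suc lo \<in> {Suc lo..hi}" using inV(10) by simp
    then show "S (Suc lo) \<subseteq> L2" unfolding L2_def by blast
  qed (use inV(10) in auto)
  have c8: "\<not> sep (S A) R2" by (rule nonsep_mono[OF e_A_ai]) (auto simp: R2_def)
  have wM: "sep MM (S w)" if "w \<in> {lo..hi}" for w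
    using sep_sym sepMM N n(10) that wV inV by meson
  have wR: "sep (S A \<union> R2) (S w)" if "w \<in> {lo..hi}" for w
  proof -
    have "sep (S w) (S A)" "sep (S w) (S ai)" "sep (S w) (S bj)" "sep (S w) (S D)"
      using N n(10) that wV inV by meson+
    then show ?thesis using sep_sym sepRR by blast
  qed
  have c9: "sep LL MM" using sep_sym[OF sep_path[of lo hi MM S]] wM eS1 inV(10) unfolding LL_def by auto
  have c10: "sep LL (S A \<union> R2)" using sep_sym[OF sep_path[of lo hi "S A \<union> R2" S]] wR eS1 inV(10) unfolding LL_def by auto
  have c11: "sep MM (S A \<union> R2)"
  proof -
    have "sep (S bi) (S A \<union> R2)" using sepRR N n(11,12,13,14) inV by blast
    moreover have "sep (S aj) (S A \<union> R2)" using sepRR N n(15,16,17,18) inV by blast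
    ultimately have "sep (S A \<union> R2) MM" using sepMM sep_sym by blast
    then show ?thesis using sep_sym by blast
  qed
  show ?thesis using c1 c2 c3 c4 c5 c6 c7 c8 c9 c10 c11 LL
    unfolding S_def[symmetric] L2_def[symmetric] R2_def[symmetric] MM_def[symmetric] LL_def[symmetric]
    by simp
qed

lemma core:
  fixes B C A D ai bi aj bj lo hi :: nat and V :: "nat set" and P :: "nat \<Rightarrow> (real^2) set"
  assumes ar: "r>0"
  and PV: "\<forall>x\<in>V. finite (P x) \<and> P x \<noteq> {} \<and> P x \<subseteq> sphere c r"
  and H: "\<forall>x\<in>V. \<forall>y\<in>V. x \<noteq> y \<longrightarrow> (adj x y \<longleftrightarrow> convex hull P x \<inter> convex hull P y \<noteq> {})"
  and inV: "B\<in>V" "C\<in>V" "A\<in>V" "D\<in>V" "ai\<in>V" "bi\<in>V" "aj\<in>V" "bj\<in>V" "{lo..hi} \<subseteq> V" "lo < hi"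
  and e: "B\<noteq>lo \<and> adj B lo" "\<forall>w. lo \<le> w \<and> w < hi \<longrightarrow> adj w (Suc w)" "hi \<noteq> C \<and> adj hi C"
    "B \<noteq> bi \<and> adj B bi" "bi\<noteq>aj \<and> adj bi aj" "aj\<noteq>C \<and> adj aj C"
    "B\<noteq>A \<and> adj B A" "A \<noteq> ai \<and> adj A ai" "ai \<noteq> bj \<and> adj ai bj" "bj \<noteq> D \<and> adj bj D" "D \<noteq> C \<and> adj D C"
  and n: "B \<noteq> C \<and> \<not> adj B C" "\<forall>w\<in>{Suc lo..hi}. B \<noteq> w \<and> \<not> adj B w"
    "B \<noteq> aj \<and> \<not> adj B aj" "B \<noteq> ai \<and> \<not> adj B ai" "B \<noteq> bj \<and> \<not> adj B bj" "B \<noteq> D \<and> \<not> adj B D"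
    "C \<noteq> lo \<and> \<not> adj C lo" "C \<noteq> bi \<and> \<not> adj C bi" "C \<noteq> A \<and> \<not> adj C A"
    "\<forall>w\<in>{lo..hi}. w \<noteq> bi \<and> \<not> adj w bi \<and> w \<noteq> aj \<and> \<not> adj w aj \<and> w \<noteq> A \<and> \<not> adj w A \<and>
        w \<noteq> ai \<and> \<not> adj w ai \<and> w \<noteq> bj \<and> \<not> adj w bj \<and> w \<noteq> D \<and> \<not> adj w D"
    "bi \<noteq> A \<and> \<not> adj bi A" "bi \<noteq> ai \<and> \<not> adj bi ai" "bi \<noteq> bj \<and> \<not> adj bi bj" "bi \<noteq> D \<and> \<not> adj bi D"
    "aj \<noteq> A \<and> \<not> adj aj A" "aj \<noteq> ai \<and> \<not> adj aj ai" "aj \<noteq> bj \<and> \<not> adj aj bj" "aj \<noteq> D \<and> \<not> adj aj D"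
  shows False
proof -
  note st0 = stage[OF angrep_th0 ar PV H inV e n]
  define T0 where "T0 = th0 c`P C \<union> (\<Union>w\<in>{Suc lo..hi}. th0 c`P w) \<union> th0 c`P aj \<union> (th0 c`P ai \<union> th0 c`P bj \<union> th0 c`P D)"
  have sT0: "sep (th0 c`P B) T0" using st0 unfolding T0_def by blast
  have finB: "finite (th0 c`P B)" "th0 c`P B \<noteq> {}" using PV inV by auto
  have neT0: "T0 \<noteq> {}" using PV inV unfolding T0_def by auto
  have bnd: "\<forall>x\<in>th0 c`P B \<union> T0. -pi < x \<and> x \<le> pi"
  proof -
    have "\<forall>x\<in>range (th0 c). -pi < x \<and> x \<le> pi" using th0_bnd by auto
    moreover have "th0 c`P B \<union> T0 \<subseteq> range (th0 c)" unfolding T0_def by auto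
    ultimately show ?thesis by blast
  qed
  obtain t where t: "t \<in> th0 c`P B" "\<forall>z\<in>th0 c`P B. \<forall>x\<in>T0. rho t z < rho t x"
    using rot_exists[OF finB neT0 sT0 bnd] by blast
  have tb: "-pi < t" "t \<le> pi" using t(1) th0_bnd by auto
  define th where "th = (\<lambda>p. rho t (th0 c p))"
  have ar1: "angrep c r th" unfolding th_def by (rule angrep_rot[OF tb])
  note st1 = stage[OF ar1 ar PV H inV e n]
  have img: "th ` X = rho t ` (th0 c ` X)" for X unfolding th_def by auto
  have BT: "\<forall>b\<in>th`P B. \<forall>x\<in>th`P C \<union> (\<Union>w\<in>{Suc lo..hi}. th`P w) \<union> th`P aj \<union> (th`P ai \<union> th`P bj \<union> th`P D). b < x"
  proof (intro ballI)
    fix b x assume b: "b \<in> th`P B" and x: "x \<in> th`P C \<union> (\<Union>w\<in>{Suc lo..hi}. th`P w) \<union> th`P aj \<union> (th`P ai \<union> th`P bj \<union> th`P D)"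
    obtain b0 where b0: "b0 \<in> th0 c`P B" "b = rho t b0" using b img by auto
    have eqT: "th`P C \<union> (\<Union>w\<in>{Suc lo..hi}. th`P w) \<union> th`P aj \<union> (th`P ai \<union> th`P bj \<union> th`P D) = rho t ` T0"
      unfolding T0_def img image_Un image_UN by (rule refl)
    obtain x0 where x0: "x0 \<in> T0" "x = rho t x0" using x unfolding eqT by blast
    show "b < x" using t(2) b0 x0 by blast
  qed
  have finB1: "finite (th`P B)" "finite (th`P C)" "th`P B \<noteq> {}" "th`P C \<noteq> {}" using PV inV by auto
  show False
    by (rule theta_contra[OF finB1 BT]) (use st1 in blast)+
qed




lemma memM: "{x,y} \<in> M_edges n \<longleftrightarrow> ((y = x+1 \<or> x = y+1) \<and> 1 \<le> min x y \<and> min x y < 4*n) \<or>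
   (\<exists>l. 1 \<le> l \<and> l \<le> n \<and> ((x = 4*l-3 \<and> y = 4*n+l) \<or> (y = 4*l-3 \<and> x = 4*n+l) \<or>
      (x = 4*l-2 \<and> y = 5*n+l) \<or> (y = 4*l-2 \<and> x = 5*n+l) \<or> (x = 4*n+l \<and> y = 5*n+l) \<or> (y = 4*n+l \<and> x = 5*n+l)))"
  unfolding M_edges_def by (auto simp: doubleton_eq_iff)

lemma E'_eq:
  assumes "1 \<le> i" "i \<le> n" "1 \<le> j" "j \<le> n" "i \<noteq> j"
  shows "crossing (M_edges n) (H_edges n j) (sigma_ij n i j) =
     (M_edges n - {{4*n+j,5*n+j},{4*n+i,5*n+i}}) \<union> {{4*n+j,5*n+i},{5*n+j,4*n+i}}"
proof -
  have inj: "inj_on (sigma n j) (H_vertices n 1)"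
    using assms unfolding inj_on_def H_vertices_def sigma_def by auto
  have "the_inv_into (H_vertices n 1) (sigma n j) (4*n+j) = 5*n+1"
    by (rule the_inv_into_f_eq[OF inj]) (use assms in \<open>auto simp: sigma_def H_vertices_def\<close>)
  then have s1: "sigma_ij n i j (4*n+j) = 4*n+i" using assms unfolding sigma_ij_def by (simp add: sigma_def)
  have "the_inv_into (H_vertices n 1) (sigma n j) (5*n+j) = 4*n+1"
    by (rule the_inv_into_f_eq[OF inj]) (use assms in \<open>auto simp: sigma_def H_vertices_def\<close>)
  then have s2: "sigma_ij n i j (5*n+j) = 5*n+i" using assms unfolding sigma_ij_def by (simp add: sigma_def)
  define s where "s = sigma_ij n i j"
  have ie: "{4*n+i,5*n+i} \<in> M_edges n" unfolding memM using assms by blast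
  have im: "s ` {4*n+j, 5*n+j} = {4*n+i,5*n+i}" using s1 s2 unfolding s_def by auto
  have A: "{e. e \<in> H_edges n j \<and> s ` e \<in> M_edges n} = {{4*n+j,5*n+j}}"
    using im ie unfolding H_edges_def by auto
  have B: "{s ` e |e. e \<in> H_edges n j \<and> s ` e \<in> M_edges n} = {{4*n+i,5*n+i}}"
    using im ie unfolding H_edges_def by auto
  have C: "{{u, s v} |u v. {u, v} \<in> H_edges n j \<and> u \<noteq> v \<and> {s u, s v} \<in> M_edges n} = {{4*n+j,5*n+i},{5*n+j,4*n+i}}"
  proof -
    have h: "{u, v} \<in> H_edges n j \<and> u \<noteq> v \<longleftrightarrow> (u = 4*n+j \<and> v = 5*n+j) \<or> (u = 5*n+j \<and> v = 4*n+j)" for u v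
      unfolding H_edges_def using assms by (auto simp: doubleton_eq_iff)
    have m: "{s (4*n+j), s (5*n+j)} \<in> M_edges n" "{s (5*n+j), s (4*n+j)} \<in> M_edges n"
      using ie s1 s2 unfolding s_def by (auto simp: insert_commute)
    have key: "({u, v} \<in> H_edges n j \<and> u \<noteq> v \<and> {s u, s v} \<in> M_edges n) \<longleftrightarrow>
       (u = 4*n+j \<and> v = 5*n+j) \<or> (u = 5*n+j \<and> v = 4*n+j)" for u v
      using h[of u v] m by auto
    have "{{u, s v} |u v. {u, v} \<in> H_edges n j \<and> u \<noteq> v \<and> {s u, s v} \<in> M_edges n} =
       {{u, s v} |u v. (u = 4*n+j \<and> v = 5*n+j) \<or> (u = 5*n+j \<and> v = 4*n+j)}"
      by (simp only: key)
    also have "\<dots> = {{4*n+j, s (5*n+j)}, {5*n+j, s (4*n+j)}}" by blast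
    finally show ?thesis using s1 s2 unfolding s_def by simp
  qed
  show ?thesis unfolding crossing_def s_def[symmetric] A B C by auto
qed

definition Ef :: "nat \<Rightarrow> nat \<Rightarrow> nat \<Rightarrow> nat set set" where
  "Ef n a b = (M_edges n - {{4*n+b,5*n+b},{4*n+a,5*n+a}}) \<union> {{4*n+b,5*n+a},{5*n+b,4*n+a}}"

lemma Ef_sym: "Ef n a b = Ef n b a"
  unfolding Ef_def by (auto simp: insert_commute)

definition hnd :: "nat \<Rightarrow> nat \<Rightarrow> nat \<Rightarrow> bool" where
  "hnd n x y \<longleftrightarrow> (4*n < y \<and> y \<le> 5*n \<and> x + 3 + 16*n = 4*y) \<or> (5*n < y \<and> y \<le> 6*n \<and> x + 2 + 20*n = 4*y)
     \<or> (4*n < x \<and> x \<le> 5*n \<and> y = x + n)"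


lemma memM2: "{x,y} \<in> M_edges n \<longleftrightarrow> ((y = x+1 \<or> x = y+1) \<and> 1 \<le> min x y \<and> min x y < 4*n) \<or> hnd n x y \<or> hnd n y x"
proof -
  have "(\<exists>l. 1 \<le> l \<and> l \<le> n \<and> ((x = 4*l-3 \<and> y = 4*n+l) \<or> (y = 4*l-3 \<and> x = 4*n+l) \<or>
      (x = 4*l-2 \<and> y = 5*n+l) \<or> (y = 4*l-2 \<and> x = 5*n+l) \<or> (x = 4*n+l \<and> y = 5*n+l) \<or> (y = 4*n+l \<and> x = 5*n+l)))
     \<longleftrightarrow> hnd n x y \<or> hnd n y x" (is "?L \<longleftrightarrow> ?R")
  proof
    assume ?L
    then obtain l where l: "1 \<le> l" "l \<le> n" "(x = 4*l-3 \<and> y = 4*n+l) \<or> (y = 4*l-3 \<and> x = 4*n+l) \<or>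
      (x = 4*l-2 \<and> y = 5*n+l) \<or> (y = 4*l-2 \<and> x = 5*n+l) \<or> (x = 4*n+l \<and> y = 5*n+l) \<or> (y = 4*n+l \<and> x = 5*n+l)"
      by blast
    from l(3) consider "x = 4*l-3 \<and> y = 4*n+l" | "y = 4*l-3 \<and> x = 4*n+l" | "x = 4*l-2 \<and> y = 5*n+l"
      | "y = 4*l-2 \<and> x = 5*n+l" | "x = 4*n+l \<and> y = 5*n+l" | "y = 4*n+l \<and> x = 5*n+l" by blast
    then show ?R
    proof cases
      case 1 then have "4*n < y \<and> y \<le> 5*n \<and> x + 3 + 16*n = 4*y" using l by arith
      then show ?thesis unfolding hnd_def by blast
    next
      case 2 then have "4*n < x \<and> x \<le> 5*n \<and> y + 3 + 16*n = 4*x" using l by arith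
      then show ?thesis unfolding hnd_def by blast
    next
      case 3 then have "5*n < y \<and> y \<le> 6*n \<and> x + 2 + 20*n = 4*y" using l by arith
      then show ?thesis unfolding hnd_def by blast
    next
      case 4 then have "5*n < x \<and> x \<le> 6*n \<and> y + 2 + 20*n = 4*x" using l by arith
      then show ?thesis unfolding hnd_def by blast
    next
      case 5 then have "4*n < x \<and> x \<le> 5*n \<and> y = x + n" using l by arith
      then show ?thesis unfolding hnd_def by blast
    next
      case 6 then have "4*n < y \<and> y \<le> 5*n \<and> x = y + n" using l by arith
      then show ?thesis unfolding hnd_def by blast
    qed
  next
    assume r: ?R
    show ?L
    proof (cases "4*n < y \<and> y \<le> 5*n \<and> x + 3 + 16*n = 4*y")
      case True then have "1 \<le> y-4*n \<and> y-4*n \<le> n \<and> x = 4*(y-4*n)-3 \<and> y = 4*n+(y-4*n)" by arith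
      then show ?thesis by blast
    next
      case F1: False
      show ?thesis
      proof (cases "5*n < y \<and> y \<le> 6*n \<and> x + 2 + 20*n = 4*y")
        case True then have "1 \<le> y-5*n \<and> y-5*n \<le> n \<and> x = 4*(y-5*n)-2 \<and> y = 5*n+(y-5*n)" by arith
        then show ?thesis by blast
      next
        case F2: False
        show ?thesis
        proof (cases "4*n < x \<and> x \<le> 5*n \<and> y = x + n")
          case True then have "1 \<le> x-4*n \<and> x-4*n \<le> n \<and> x = 4*n+(x-4*n) \<and> y = 5*n+(x-4*n)" by arith
          then show ?thesis by blast
        next
          case F3: False
          show ?thesis
          proof (cases "4*n < x \<and> x \<le> 5*n \<and> y + 3 + 16*n = 4*x")
            case True then have "1 \<le> x-4*n \<and> x-4*n \<le> n \<and> y = 4*(x-4*n)-3 \<and> x = 4*n+(x-4*n)" by arith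
            then show ?thesis by blast
          next
            case F4: False
            show ?thesis
            proof (cases "5*n < x \<and> x \<le> 6*n \<and> y + 2 + 20*n = 4*x")
              case True then have "1 \<le> x-5*n \<and> x-5*n \<le> n \<and> y = 4*(x-5*n)-2 \<and> x = 5*n+(x-5*n)" by arith
              then show ?thesis by blast
            next
              case F5: False
              then have "4*n < y \<and> y \<le> 5*n \<and> x = y + n" using r F1 F2 F3 F4 unfolding hnd_def by blast
              then have "1 \<le> y-4*n \<and> y-4*n \<le> n \<and> y = 4*n+(y-4*n) \<and> x = 5*n+(y-4*n)" by arith
              then show ?thesis by blast
            qed
          qed
        qed
      qed
    qed
  qed
  then show ?thesis unfolding memM by blast
qed

lemma memEf: "{x,y} \<in> Ef n a b \<longleftrightarrow>
  ((((y = x+1 \<or> x = y+1) \<and> 1 \<le> min x y \<and> min x y < 4*n) \<or> hnd n x y \<or> hnd n y x)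
   \<and> \<not> (x = 4*n+b \<and> y = 5*n+b \<or> x = 5*n+b \<and> y = 4*n+b)
   \<and> \<not> (x = 4*n+a \<and> y = 5*n+a \<or> x = 5*n+a \<and> y = 4*n+a))
  \<or> (x = 4*n+b \<and> y = 5*n+a) \<or> (x = 5*n+a \<and> y = 4*n+b) \<or> (x = 5*n+b \<and> y = 4*n+a) \<or> (x = 4*n+a \<and> y = 5*n+b)"
  unfolding Ef_def Un_iff Diff_iff memM2[symmetric] by (auto simp: doubleton_eq_iff)

lemma main_lt:
  assumes ab: "a0 < b0" "b0 < n" and k: "k > 0"
  shows "\<not> k_polygon_circle {1..6*n} (Ef n (a0+1) (b0+1)) k"
proof
  assume "k_polygon_circle {1..6*n} (Ef n (a0+1) (b0+1)) k"
  then obtain c :: "real^2" and r :: real and P where r: "r > 0"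
    and PV0: "\<forall>x\<in>{1..6*n}. finite (P x) \<and> card (P x) = k \<and> P x \<subseteq> sphere c r"
    and H: "\<forall>x\<in>{1..6*n}. \<forall>y\<in>{1..6*n}. x \<noteq> y \<longrightarrow> ({x, y} \<in> Ef n (a0+1) (b0+1) \<longleftrightarrow> convex hull P x \<inter> convex hull P y \<noteq> {})"
    unfolding k_polygon_circle_def by blast
  have PV: "\<forall>x\<in>{1..6*n}. finite (P x) \<and> P x \<noteq> {} \<and> P x \<subseteq> sphere c r"
    using PV0 k by (metis card.empty less_numeral_extra(3))
  let ?adj = "\<lambda>x y. {x,y} \<in> Ef n (a0+1) (b0+1)"
  show False
  proof (rule core[OF r PV H, where B="4*a0+2" and C="4*b0+1" and A="4*a0+1" and D="4*b0+2"
      and ai="4*n+(a0+1)" and bi="5*n+(a0+1)" and aj="4*n+(b0+1)" and bj="5*n+(b0+1)" and lo="4*a0+3" and hi="4*b0"])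
    show "4*a0+2 \<in> {1..6*n}" "4*b0+1 \<in> {1..6*n}" "4*a0+1 \<in> {1..6*n}" "4*b0+2 \<in> {1..6*n}"
      "4*n+(a0+1) \<in> {1..6*n}" "5*n+(a0+1) \<in> {1..6*n}" "4*n+(b0+1) \<in> {1..6*n}" "5*n+(b0+1) \<in> {1..6*n}"
      "{4*a0+3..4*b0} \<subseteq> {1..6*n}" "4*a0+3 < 4*b0" using ab by auto
    show "4*a0+2 \<noteq> 4*a0+3 \<and> ?adj (4*a0+2) (4*a0+3)" using ab by (auto simp: memEf hnd_def)
    show "\<forall>w. 4*a0+3 \<le> w \<and> w < 4*b0 \<longrightarrow> ?adj w (Suc w)" using ab by (auto simp: memEf hnd_def)
    show "4*b0 \<noteq> 4*b0+1 \<and> ?adj (4*b0) (4*b0+1)" using ab by (auto simp: memEf hnd_def)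
    show "4*a0+2 \<noteq> 5*n+(a0+1) \<and> ?adj (4*a0+2) (5*n+(a0+1))" using ab by (auto simp: memEf hnd_def)
    show "5*n+(a0+1) \<noteq> 4*n+(b0+1) \<and> ?adj (5*n+(a0+1)) (4*n+(b0+1))" using ab by (auto simp: memEf hnd_def)
    show "4*n+(b0+1) \<noteq> 4*b0+1 \<and> ?adj (4*n+(b0+1)) (4*b0+1)" using ab by (auto simp: memEf hnd_def)
    show "4*a0+2 \<noteq> 4*a0+1 \<and> ?adj (4*a0+2) (4*a0+1)" using ab by (auto simp: memEf hnd_def)
    show "4*a0+1 \<noteq> 4*n+(a0+1) \<and> ?adj (4*a0+1) (4*n+(a0+1))" using ab by (auto simp: memEf hnd_def)
    show "4*n+(a0+1) \<noteq> 5*n+(b0+1) \<and> ?adj (4*n+(a0+1)) (5*n+(b0+1))" using ab by (auto simp: memEf hnd_def)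
    show "5*n+(b0+1) \<noteq> 4*b0+2 \<and> ?adj (5*n+(b0+1)) (4*b0+2)" using ab by (auto simp: memEf hnd_def)
    show "4*b0+2 \<noteq> 4*b0+1 \<and> ?adj (4*b0+2) (4*b0+1)" using ab by (auto simp: memEf hnd_def)
    show "4*a0+2 \<noteq> 4*b0+1 \<and> \<not> ?adj (4*a0+2) (4*b0+1)" using ab by (auto simp: memEf hnd_def)
    show "\<forall>w\<in>{Suc (4*a0+3)..4*b0}. 4*a0+2 \<noteq> w \<and> \<not> ?adj (4*a0+2) w" using ab by (auto simp: memEf hnd_def)
    show "4*a0+2 \<noteq> 4*n+(b0+1) \<and> \<not> ?adj (4*a0+2) (4*n+(b0+1))" using ab by (auto simp: memEf hnd_def)
    show "4*a0+2 \<noteq> 4*n+(a0+1) \<and> \<not> ?adj (4*a0+2) (4*n+(a0+1))" using ab by (auto simp: memEf hnd_def)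
    show "4*a0+2 \<noteq> 5*n+(b0+1) \<and> \<not> ?adj (4*a0+2) (5*n+(b0+1))" using ab by (auto simp: memEf hnd_def)
    show "4*a0+2 \<noteq> 4*b0+2 \<and> \<not> ?adj (4*a0+2) (4*b0+2)" using ab by (auto simp: memEf hnd_def)
    show "4*b0+1 \<noteq> 4*a0+3 \<and> \<not> ?adj (4*b0+1) (4*a0+3)" using ab by (auto simp: memEf hnd_def)
    show "4*b0+1 \<noteq> 5*n+(a0+1) \<and> \<not> ?adj (4*b0+1) (5*n+(a0+1))" using ab by (auto simp: memEf hnd_def)
    show "4*b0+1 \<noteq> 4*a0+1 \<and> \<not> ?adj (4*b0+1) (4*a0+1)" using ab by (auto simp: memEf hnd_def)
    show "\<forall>w\<in>{4*a0+3..4*b0}. w \<noteq> 5*n+(a0+1) \<and> \<not> ?adj w (5*n+(a0+1)) \<and> w \<noteq> 4*n+(b0+1) \<and> \<not> ?adj w (4*n+(b0+1)) \<and>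
        w \<noteq> 4*a0+1 \<and> \<not> ?adj w (4*a0+1) \<and> w \<noteq> 4*n+(a0+1) \<and> \<not> ?adj w (4*n+(a0+1)) \<and> w \<noteq> 5*n+(b0+1) \<and> \<not> ?adj w (5*n+(b0+1)) \<and>
        w \<noteq> 4*b0+2 \<and> \<not> ?adj w (4*b0+2)" using ab by (auto simp: memEf hnd_def)
    show "5*n+(a0+1) \<noteq> 4*a0+1 \<and> \<not> ?adj (5*n+(a0+1)) (4*a0+1)" using ab by (auto simp: memEf hnd_def)
    show "5*n+(a0+1) \<noteq> 4*n+(a0+1) \<and> \<not> ?adj (5*n+(a0+1)) (4*n+(a0+1))" using ab by (auto simp: memEf hnd_def)
    show "5*n+(a0+1) \<noteq> 5*n+(b0+1) \<and> \<not> ?adj (5*n+(a0+1)) (5*n+(b0+1))" using ab by (auto simp: memEf hnd_def)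
    show "5*n+(a0+1) \<noteq> 4*b0+2 \<and> \<not> ?adj (5*n+(a0+1)) (4*b0+2)" using ab by (auto simp: memEf hnd_def)
    show "4*n+(b0+1) \<noteq> 4*a0+1 \<and> \<not> ?adj (4*n+(b0+1)) (4*a0+1)" using ab by (auto simp: memEf hnd_def)
    show "4*n+(b0+1) \<noteq> 4*n+(a0+1) \<and> \<not> ?adj (4*n+(b0+1)) (4*n+(a0+1))" using ab by (auto simp: memEf hnd_def)
    show "4*n+(b0+1) \<noteq> 5*n+(b0+1) \<and> \<not> ?adj (4*n+(b0+1)) (5*n+(b0+1))" using ab by (auto simp: memEf hnd_def)
    show "4*n+(b0+1) \<noteq> 4*b0+2 \<and> \<not> ?adj (4*n+(b0+1)) (4*b0+2)" using ab by (auto simp: memEf hnd_def)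
  qed
qed

theorem lemma7:
  fixes n k i j :: nat
  assumes "n > 2" and "k > 0"
    and "i \<in> {1..n}" and "j \<in> {1..n}" and "i \<noteq> j"
  shows "\<not> k_polygon_circle (M_vertices n) (crossing (M_edges n) (H_edges n j) (sigma_ij n i j)) k"
proof -
  have E: "crossing (M_edges n) (H_edges n j) (sigma_ij n i j) = Ef n i j"
    unfolding Ef_def using E'_eq assms(3-5) by auto
  have V: "M_vertices n = {1..6*n}" unfolding M_vertices_def by simp
  show ?thesis
  proof (cases "i < j")
    case True
    then have "i = (i-1)+1" "j = (j-1)+1" "i-1 < j-1" "j-1 < n" using assms(3,4) by auto
    then show ?thesis unfolding E V using main_lt[of "i-1" "j-1" n k] assms(2) by metis
  next
    case False then have "j < i" using assms(5) by simp
    then have "i = (i-1)+1" "j = (j-1)+1" "j-1 < i-1" "i-1 < n" using assms(3,4) by auto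
    then show ?thesis unfolding E V Ef_sym[of n i j] using main_lt[of "j-1" "i-1" n k] assms(2) by metis
  qed
qed


end
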